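(* Let $0\le t_0<t$, let $\bm{D}\in\mathbb{R}^{n\times n}$ be a constant diagonal matrix with positive diagonal entries, and take $\bm{Q}_\tau=2\bm{D}$, $\bm{A}_\tau=\bm{0}$, $\hat{\bm{B}}_\tau=\sqrt2\,\bm{I}$ for all $\tau\in[t_0,t]$. Then, with $\bm{M}_{tt_0}$ defined in the context and $\omega_i:=2\sqrt{D_{ii}}$, for all $\bm{x},\bm{y}\in\mathbb{R}^n$, $$\frac12\begin{pmatrix}\bm{x}\\\bm{y}\end{pmatrix}^{\!\top}\bm{M}_{tt_0}\begin{pmatrix}\bm{x}\\\bm{y}\end{pmatrix}=\frac12\sum_{i=1}^n\frac{\omega_i(x_i^2+y_i^2)\cosh(\omega_i(t-t_0))-2\omega_i x_iy_i}{2\sinh(\omega_i(t-t_0))}.$$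
   Context: For matrix functions $\bm{A}_\tau\in\mathbb{R}^{n\times n}$, $\hat{\bm{B}}_\tau\in\mathbb{R}^{n\times m}$, $\bm{Q}_\tau\succeq\bm{0}$ on $[t_0,t]$: $\bm{\Pi}(\tau,\bm{K}_1,t)$ denotes the value at $\tau\in[t_0,t]$ of the solution, solved backward in time, of the Riccati ODE $\dot{\bm{K}}_\tau=-\bm{A}_\tau^\top\bm{K}_\tau-\bm{K}_\tau\bm{A}_\tau+\bm{K}_\tau\hat{\bm{B}}_\tau\hat{\bm{B}}_\tau^\top\bm{K}_\tau-\bm{Q}_\tau$, $\bm{K}_{\tau=t}=\bm{K}_1$. Let $\hat{\bm{A}}_\tau:=\bm{A}_\tau-\hat{\bm{B}}_\tau\hat{\bm{B}}_\tau^\top\bm{\Pi}(\tau,\bm{0},t)$, $\hat{\bm{\Phi}}_{t\tau}$ its state transition matrix from $\tau$ to $t$, $\hat{\bm{\Gamma}}_{tt_0}:=\int_{t_0}^t\hat{\bm{\Phi}}_{t\sigma}\hat{\bm{B}}_\sigma\hat{\bm{B}}_\sigma^\top\hat{\bm{\Phi}}_{t\sigma}^\top\mathrm{d}\sigma$, and $$\bm{M}_{tt_0}:=\begin{bmatrix}\hat{\bm{\Phi}}_{tt_0}^\top\hat{\bm{\Gamma}}_{tt_0}^{-1}\hat{\bm{\Phi}}_{tt_0}+\bm{\Pi}(t_0,\bm{0},t) & -\hat{\bm{\Phi}}_{tt_0}^\top\hat{\bm{\Gamma}}_{tt_0}^{-1}\\ -\hat{\bm{\Gamma}}_{tt_0}^{-1}\hat{\bm{\Phi}}_{tt_0}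 & \hat{\bm{\Gamma}}_{tt_0}^{-1}\end{bmatrix}.$$ *)

theory Defs
  imports "HOL-Analysis.Analysis"
begin

text \<open>Solution on [t0,t] of the backward Riccati ODE
  K' = -A^T K - K A + K B B^T K - Q, K(t) = K1 (normalised to 0 outside [t0,t]
  so that it is unique when it exists).\<close>
definition riccati_sol ::
  "(real \<Rightarrow> real^'n^'n) \<Rightarrow> (real \<Rightarrow> real^'m^'n) \<Rightarrow> (real \<Rightarrow> real^'n^'n)
   \<Rightarrow> real \<Rightarrow> real \<Rightarrow> real^'n^'n \<Rightarrow> real \<Rightarrow> real^'n^'n" where
  "riccati_sol A B Q t0 t K1 = (THE K.
     (\<forall>\<tau>\<in>{t0..t}. (K has_vector_derivative
        (- (transpose (A \<tau>) ** K \<tau>) - K \<tau> ** A \<tau>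
         + K \<tau> ** B \<tau> ** transpose (B \<tau>) ** K \<tau> - Q \<tau>)) (at \<tau> within {t0..t}))
     \<and> K t = K1 \<and> (\<forall>\<tau>. \<tau> \<notin> {t0..t} \<longrightarrow> K \<tau> = 0))"

definition Pi_ric ::
  "(real \<Rightarrow> real^'n^'n) \<Rightarrow> (real \<Rightarrow> real^'m^'n) \<Rightarrow> (real \<Rightarrow> real^'n^'n)
   \<Rightarrow> real \<Rightarrow> real \<Rightarrow> real^'n^'n \<Rightarrow> real \<Rightarrow> real^'n^'n" where
  "Pi_ric A B Q t0 \<tau> K1 t = riccati_sol A B Q t0 t K1 \<tau>"

definition A_hat ::
  "(real \<Rightarrow> real^'n^'n) \<Rightarrow> (real \<Rightarrow> real^'m^'n) \<Rightarrow> (real \<Rightarrow> real^'n^'n)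
   \<Rightarrow> real \<Rightarrow> real \<Rightarrow> real \<Rightarrow> real^'n^'n" where
  "A_hat A B Q t0 t \<tau> = A \<tau> - B \<tau> ** transpose (B \<tau>) ** Pi_ric A B Q t0 \<tau> 0 t"

definition trans_fun ::
  "(real \<Rightarrow> real^'n^'n) \<Rightarrow> real \<Rightarrow> real \<Rightarrow> real \<Rightarrow> real \<Rightarrow> real^'n^'n" where
  "trans_fun F t0 t \<tau> = (THE \<Phi>.
     (\<forall>s\<in>{t0..t}. (\<Phi> has_vector_derivative (F s ** \<Phi> s)) (at s within {t0..t}))
     \<and> \<Phi> \<tau> = mat 1 \<and> (\<forall>s. s \<notin> {t0..t} \<longrightarrow> \<Phi> s = 0))"

definition Phi_hat ::
  "(real \<Rightarrow> real^'n^'n) \<Rightarrow> (real \<Rightarrow> real^'m^'n) \<Rightarrow> (real \<Rightarrow> real^'n^'n)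
   \<Rightarrow> real \<Rightarrow> real \<Rightarrow> real \<Rightarrow> real^'n^'n" where
  "Phi_hat A B Q t0 t \<tau> = trans_fun (A_hat A B Q t0 t) t0 t \<tau> t"

definition Gamma_hat ::
  "(real \<Rightarrow> real^'n^'n) \<Rightarrow> (real \<Rightarrow> real^'m^'n) \<Rightarrow> (real \<Rightarrow> real^'n^'n)
   \<Rightarrow> real \<Rightarrow> real \<Rightarrow> real^'n^'n" where
  "Gamma_hat A B Q t0 t = integral {t0..t} (\<lambda>\<sigma>.
     Phi_hat A B Q t0 t \<sigma> ** B \<sigma> ** transpose (B \<sigma>) ** transpose (Phi_hat A B Q t0 t \<sigma>))"

text \<open>The 2n x 2n block matrix M_{t t0}, indexed by 'n + 'n
  (Inl = first block, Inr = second block).\<close>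
definition M_mat ::
  "(real \<Rightarrow> real^'n^'n) \<Rightarrow> (real \<Rightarrow> real^'m^'n) \<Rightarrow> (real \<Rightarrow> real^'n^'n)
   \<Rightarrow> real \<Rightarrow> real \<Rightarrow> real^('n + 'n)^('n + 'n)" where
  "M_mat A B Q t0 t = (let
      P = Phi_hat A B Q t0 t t0;
      Gi = matrix_inv (Gamma_hat A B Q t0 t);
      M11 = transpose P ** Gi ** P + Pi_ric A B Q t0 t0 0 t;
      M12 = - (transpose P ** Gi);
      M21 = - (Gi ** P);
      M22 = Gi
    in (\<chi> i j. case i of
          Inl a \<Rightarrow> (case j of Inl b \<Rightarrow> M11 $ a $ b | Inr b \<Rightarrow> M12 $ a $ b)
        | Inr a \<Rightarrow> (case j of Inl b \<Rightarrow> M21 $ a $ b | Inr b \<Rightarrow> M22 $ a $ b)))"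

definition stack :: "real^'n \<Rightarrow> real^'n \<Rightarrow> real^('n + 'n)" where
  "stack x y = (\<chi> i. case i of Inl a \<Rightarrow> x $ a | Inr b \<Rightarrow> y $ b)"

end

theory Submission
  imports Defs
begin

definition dg :: "('n::finite \<Rightarrow> real) \<Rightarrow> real^'n^'n" where
  "dg f = (\<chi> i j. if i = j then f i else 0)"

lemma dg_nth [simp]: "dg f $ i $ j = (if i = j then f i else 0)"
  by (simp add: dg_def)

lemma dg_eq_iff: "dg f = dg g \<longleftrightarrow> f = g"
  by (auto simp: vec_eq_iff fun_eq_iff)

lemma dg_mult [simp]: "dg f ** dg g = dg (\<lambda>i. f i * g i)"
proof -
  have "(\<Sum>k\<in>UNIV. (if i = (k::'a) then f i else 0) * (if k = j then g k else 0)) = (if i = j then f i * g i else 0)" for i j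
  proof -
    have "(\<Sum>k\<in>UNIV. (if i = k then f i else 0) * (if k = j then g k else 0))
        = (\<Sum>k\<in>UNIV. if k = i then f i * (if k = j then g k else 0) else 0)"
      by (rule sum.cong) auto
    then show ?thesis by simp
  qed
  then show ?thesis by (simp add: vec_eq_iff matrix_matrix_mult_def)
qed

lemma dg_add [simp]: "dg f + dg g = dg (\<lambda>i. f i + g i)"
  by (simp add: vec_eq_iff)
lemma dg_diff [simp]: "dg f - dg g = dg (\<lambda>i. f i - g i)"
  by (simp add: vec_eq_iff)
lemma dg_uminus [simp]: "- dg f = dg (\<lambda>i. - f i)"
  by (simp add: vec_eq_iff)
lemma dg_scaleR: "c *\<^sub>R dg f = dg (\<lambda>i. c * f i)"
  by (simp add: vec_eq_iff)
lemma dg_transpose [simp]: "transpose (dg f) = dg f"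
  by (simp add: vec_eq_iff transpose_def)
lemma mat1_dg: "(mat 1 :: real^'n^'n) = dg (\<lambda>_. 1)"
  by (simp add: vec_eq_iff mat_def)
lemma zero_dg: "(0 :: real^'n^'n) = dg (\<lambda>_. 0)"
  by (simp add: vec_eq_iff)

lemma dg_sum: "dg f = (\<Sum>k\<in>UNIV. f k *\<^sub>R dg (\<lambda>j. if j = k then 1 else 0))"
proof -
  have "(\<Sum>k\<in>UNIV. f k * (if i = j then if i = (k::'a) then 1 else 0 else 0)) = (if i = j then f i else 0)" for i j :: 'a
  proof -
    have "(\<Sum>k\<in>UNIV. f k * (if i = j then if i = k then 1 else 0 else 0))
        = (\<Sum>k\<in>UNIV. if k = i then (if i = j then f i else 0) else 0)"
      by (rule sum.cong) auto
    then show ?thesis by simp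
  qed
  moreover have "(\<Sum>x\<in>UNIV. f x * (if i = x then 1 else 0)) = f i" for i
  proof -
    have "(\<Sum>x\<in>UNIV. f x * (if i = x then 1 else 0)) = (\<Sum>x\<in>UNIV. if x = i then f i else 0)"
      by (rule sum.cong) auto
    then show ?thesis by simp
  qed
  ultimately show ?thesis by (simp add: vec_eq_iff dg_scaleR)
qed

lemma dg_deriv:
  assumes "\<And>i. (g i has_real_derivative g' i) (at s within S)"
  shows "((\<lambda>s. dg (\<lambda>i. g i s)) has_vector_derivative dg g') (at s within S)"
proof -
  have "((\<lambda>s. \<Sum>k\<in>UNIV. g k s *\<^sub>R dg (\<lambda>j. if j = k then 1 else 0)) has_vector_derivative
        (\<Sum>k\<in>UNIV. g' k *\<^sub>R dg (\<lambda>j. if j = k then 1 else 0))) (at s within S)"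
    by (auto intro!: derivative_eq_intros assms)
  then show ?thesis by (simp add: dg_sum[symmetric])
qed

lemma norm_mult_bound:
  fixes A B :: "real^'n^'n"
  shows "norm (A ** B) \<le> real CARD('n) ^ 3 * (norm A * norm B)"
proof -
  have "norm (A ** B) \<le> (\<Sum>i\<in>UNIV. norm ((A ** B) $ i))" unfolding norm_vec_def by (rule L2_set_le_sum) simp
  also have "\<dots> \<le> (\<Sum>i\<in>UNIV. \<Sum>j\<in>UNIV. \<bar>(A ** B) $ i $ j\<bar>)"
    by (intro sum_mono norm_le_l1_cart)
  also have "\<dots> \<le> (\<Sum>i\<in>(UNIV::'n set). \<Sum>j\<in>(UNIV::'n set). \<Sum>k\<in>(UNIV::'n set). norm A * norm B)"
  proof (rule sum_mono, rule sum_mono)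
    fix i j
    have "\<bar>(A ** B) $ i $ j\<bar> = \<bar>\<Sum>k\<in>UNIV. A $ i $ k * B $ k $ j\<bar>"
      by (simp add: matrix_matrix_mult_def)
    also have "\<dots> \<le> (\<Sum>k\<in>UNIV. \<bar>A $ i $ k * B $ k $ j\<bar>)" by (rule sum_abs)
    also have "\<dots> \<le> (\<Sum>k\<in>(UNIV::'n set). norm A * norm B)"
    proof (intro sum_mono)
      fix k
      have a: "\<bar>A $ i $ k\<bar> \<le> norm A"
        using component_le_norm_cart[of "A $ i" k] Finite_Cartesian_Product.norm_nth_le[of A i] by linarith
      have b: "\<bar>B $ k $ j\<bar> \<le> norm B"
        using component_le_norm_cart[of "B $ k" j] Finite_Cartesian_Product.norm_nth_le[of B k] by linarith
      show "\<bar>A $ i $ k * B $ k $ j\<bar> \<le> norm A * norm B"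
        unfolding abs_mult by (rule mult_mono[OF a b]) auto
    qed
    finally show "\<bar>(A ** B) $ i $ j\<bar> \<le> (\<Sum>k\<in>(UNIV::'n set). norm A * norm B)" .
  qed
  also have "\<dots> = real CARD('n) ^ 3 * (norm A * norm B)"
    by (simp add: power3_eq_cube)
  finally show ?thesis .
qed

lemma ode_zero:
  fixes E E' :: "real \<Rightarrow> 'a::real_inner"
  assumes der: "\<And>s. s \<in> {a..b} \<Longrightarrow> (E has_vector_derivative E' s) (at s within {a..b})"
  and bnd: "\<And>s. s \<in> {a..b} \<Longrightarrow> norm (E' s) \<le> C * norm (E s)"
  and c: "c \<in> {a..b}" and E0: "E c = 0"
  and s: "s \<in> {a..b}"
  shows "E s = 0"
proof -
  define f where "f x = E x \<bullet> E x" for x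
  define L where "L = 2 * \<bar>C\<bar>"
  have fder: "(f has_real_derivative 2 * (E x \<bullet> E' x)) (at x within {a..b})" if "x \<in> {a..b}" for x
  proof -
    have "((\<lambda>x. E x \<bullet> E x) has_vector_derivative E x \<bullet> E' x + E' x \<bullet> E x) (at x within {a..b})"
      by (rule bounded_bilinear.has_vector_derivative[OF bounded_bilinear_inner der[OF that] der[OF that]])
    then show ?thesis unfolding f_def has_real_derivative_iff_has_vector_derivative
      by (simp add: inner_commute)
  qed
  have fnn: "f x \<ge> 0" for x unfolding f_def by simp
  have fb: "\<bar>2 * (E x \<bullet> E' x)\<bar> \<le> L * f x" if "x \<in> {a..b}" for x
  proof -
    have "\<bar>E x \<bullet> E' x\<bar> \<le> norm (E x) * norm (E' x)" by (rule Cauchy_Schwarz_ineq2)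
    also have "\<dots> \<le> norm (E x) * (C * norm (E x))"
      by (rule mult_left_mono[OF bnd[OF that]]) simp
    also have "\<dots> \<le> norm (E x) * (\<bar>C\<bar> * norm (E x))"
      by (rule mult_left_mono) (auto intro: mult_right_mono)
    finally show ?thesis unfolding L_def f_def
      by (simp add: power2_norm_eq_inner[symmetric] power2_eq_square algebra_simps)
  qed
  have fcont: "continuous_on {a..b} f"
    using fder by (meson DERIV_continuous continuous_on_eq_continuous_within)
  have interior: "at x within {a..b} = at x" if "x \<in> {s<..<c} \<or> x \<in> {c<..<s}" for x
    using that s c by (intro at_within_Icc_at) auto
  have "f s \<le> 0"
  proof (cases "s \<le> c")
    case True
    define g where "g x = f x * exp (L * x)" for x
    have "g s \<le> g c"
    proof (rule DERIV_nonneg_imp_increasing_open[OF True])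
      fix x assume x: "s < x" "x < c"
      then have xi: "x \<in> {a..b}" using s c by auto
      have "(g has_real_derivative (2 * (E x \<bullet> E' x)) * exp (L * x) + f x * (exp (L * x) * L)) (at x)"
        unfolding g_def using fder[OF xi] interior[of x] x
        by (auto intro!: derivative_eq_intros)
      moreover have "(2 * (E x \<bullet> E' x)) * exp (L * x) + f x * (exp (L * x) * L) \<ge> 0"
      proof -
        have "(2 * (E x \<bullet> E' x) + L * f x) * exp (L * x) \<ge> 0"
          using fb[OF xi] by (intro mult_nonneg_nonneg) auto
        then show ?thesis by (simp add: algebra_simps)
      qed
      ultimately show "\<exists>y. (g has_real_derivative y) (at x) \<and> 0 \<le> y" by blast
    next
      show "continuous_on {s..c} g" unfolding g_def
        using s c by (intro continuous_intros continuous_on_subset[OF fcont]) auto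
    qed
    moreover have "f c = 0" unfolding f_def using E0 by simp
    ultimately have "f s * exp (L * s) \<le> 0" unfolding g_def by simp
    then show ?thesis by (simp add: mult_le_0_iff)
  next
    case False
    define g where "g x = - (f x * exp (- (L * x)))" for x
    have cs: "c \<le> s" using False by simp
    have "g c \<le> g s"
    proof (rule DERIV_nonneg_imp_increasing_open[OF cs])
      fix x assume x: "c < x" "x < s"
      then have xi: "x \<in> {a..b}" using s c by auto
      have "(g has_real_derivative - ((2 * (E x \<bullet> E' x)) * exp (- (L * x)) + f x * (exp (- (L * x)) * - L))) (at x)"
        unfolding g_def using fder[OF xi] interior[of x] x
        by (auto intro!: derivative_eq_intros)
      moreover have "- ((2 * (E x \<bullet> E' x)) * exp (- (L * x)) + f x * (exp (- (L * x)) * - L)) \<ge> 0"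
      proof -
        have "(L * f x - 2 * (E x \<bullet> E' x)) * exp (- (L * x)) \<ge> 0"
          using fb[OF xi] by (intro mult_nonneg_nonneg) auto
        then show ?thesis by (simp add: algebra_simps)
      qed
      ultimately show "\<exists>y. (g has_real_derivative y) (at x) \<and> 0 \<le> y" by blast
    next
      show "continuous_on {c..s} g" unfolding g_def
        using s c by (intro continuous_intros continuous_on_subset[OF fcont]) auto
    qed
    moreover have "f c = 0" unfolding f_def using E0 by simp
    ultimately have "f s * exp (- (L * s)) \<le> 0" unfolding g_def by simp
    then show ?thesis by (simp add: mult_le_0_iff)
  qed
  with fnn[of s] have "f s = 0" by simp
  then show ?thesis unfolding f_def by simp
qed

lemma bounded_on_deriv:
  fixes K :: "real \<Rightarrow> 'a::real_normed_vector"
  assumes "\<And>s. s \<in> {a..b} \<Longrightarrow> (K has_vector_derivative K' s) (at s within {a..b})"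
  shows "\<exists>M. \<forall>s\<in>{a..b}. norm (K s) \<le> M"
proof -
  have "continuous_on {a..b} K"
    using assms by (meson has_vector_derivative_continuous continuous_on_eq_continuous_within)
  then have "bounded (K ` {a..b})" by (intro compact_imp_bounded compact_continuous_image) auto
  then show ?thesis by (auto simp: bounded_iff)
qed

lemma mul_dg_const: "K ** dg (\<lambda>_. c) = c *\<^sub>R K"
proof -
  have "(\<Sum>k\<in>UNIV. K $ i $ k * (if k = j then c else 0)) = c * K $ i $ j" for i j
  proof -
    have "(\<Sum>k\<in>UNIV. K $ i $ k * (if k = j then c else 0)) = (\<Sum>k\<in>UNIV. if k = j then c * K $ i $ j else 0)"
      by (rule sum.cong) auto
    then show ?thesis by simp
  qed
  then show ?thesis by (simp add: vec_eq_iff matrix_matrix_mult_def)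
qed

lemma dg_const_mul: "dg (\<lambda>_. c) ** K = c *\<^sub>R K"
proof -
  have "(\<Sum>k\<in>UNIV. (if i = k then c else 0) * K $ k $ j) = c * K $ i $ j" for i j
  proof -
    have "(\<Sum>k\<in>UNIV. (if i = k then c else 0) * K $ k $ j) = (\<Sum>k\<in>UNIV. if k = i then c * K $ i $ j else 0)"
      by (rule sum.cong) auto
    then show ?thesis by simp
  qed
  then show ?thesis by (simp add: vec_eq_iff matrix_matrix_mult_def)
qed

lemma sq_diff: "(K::real^'n^'n) ** K - R ** R = K ** (K - R) + (K - R) ** R"
  by (simp add: vec_eq_iff matrix_matrix_mult_def sum_subtractf[symmetric] sum.distrib[symmetric] algebra_simps)

lemma BBt: "(sqrt 2 *\<^sub>R mat 1 :: real^'n^'n) ** transpose (sqrt 2 *\<^sub>R mat 1) = dg (\<lambda>_. 2)"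
  by (simp add: mat1_dg dg_scaleR)

lemma ric_F: "- (transpose 0 ** K) - K ** 0 + K ** (sqrt 2 *\<^sub>R mat 1) ** transpose (sqrt 2 *\<^sub>R mat 1) ** K - 2 *\<^sub>R D
   = 2 *\<^sub>R (K ** K) - 2 *\<^sub>R (D::real^'n^'n)"
proof -
  have "K ** (sqrt 2 *\<^sub>R mat 1) ** transpose (sqrt 2 *\<^sub>R mat 1) = 2 *\<^sub>R K"
    by (simp add: matrix_mul_assoc[symmetric] BBt mul_dg_const)
  moreover have "(2 *\<^sub>R K) ** K = 2 *\<^sub>R (K ** K)"
    by (simp add: vec_eq_iff matrix_matrix_mult_def sum_distrib_left algebra_simps)
  moreover have "transpose (0::real^'n^'n) = 0" by (simp add: vec_eq_iff transpose_def)
  moreover have "(0::real^'n^'n) ** K = 0" "K ** (0::real^'n^'n) = 0"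
    by (simp_all add: vec_eq_iff matrix_matrix_mult_def)
  ultimately show ?thesis by simp
qed

definition wf :: "real^'n^'n \<Rightarrow> 'n \<Rightarrow> real" where "wf D i = 2 * sqrt (D$i$i)"
definition K0 :: "real^'n^'n \<Rightarrow> real \<Rightarrow> real \<Rightarrow> real^'n^'n" where
  "K0 D t \<tau> = dg (\<lambda>i. wf D i / 2 * tanh (wf D i * (t - \<tau>)))"
definition Rs :: "real^'n^'n \<Rightarrow> real \<Rightarrow> real \<Rightarrow> real \<Rightarrow> real^'n^'n" where
  "Rs D t0 t \<tau> = (if \<tau> \<in> {t0..t} then K0 D t \<tau> else 0)"

lemma D_dg: assumes "\<forall>i j. i \<noteq> j \<longrightarrow> D $ i $ j = 0" shows "D = dg (\<lambda>i. D$i$i)"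
  using assms by (auto simp: vec_eq_iff)

lemma wf_sq: assumes "\<forall>i. D $ i $ i > 0" shows "wf D i ^ 2 = 4 * D$i$i"
  using assms by (simp add: wf_def power_mult_distrib less_imp_le)

lemma tanh_deriv_lin:
  "((\<lambda>\<tau>. c * tanh (w * (t - \<tau>))) has_real_derivative (- c * w * (1 - tanh (w * (t - \<tau>)) ^ 2))) (at \<tau> within S)"
proof -
  have "cosh (w * (t - \<tau>)) \<noteq> (0::real)" by (simp add: cosh_real_pos[THEN less_imp_neq, symmetric])
  then have "((\<lambda>\<tau>. c * tanh (w * (t - \<tau>))) has_real_derivative c * ((1 - tanh (w * (t - \<tau>)) ^ 2) * (w * (0 - 1)))) (at \<tau> within S)"
    apply -
    apply (rule DERIV_cmult)
    apply (rule has_field_derivative_tanh)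
    apply assumption
    apply (auto intro!: derivative_eq_intros)
    done
  then show ?thesis by (simp add: algebra_simps)
qed

lemma K0_deriv:
  assumes "\<forall>i j. i \<noteq> j \<longrightarrow> D $ i $ j = 0" "\<forall>i. D $ i $ i > 0"
  shows "(K0 D t has_vector_derivative (2 *\<^sub>R (K0 D t \<tau> ** K0 D t \<tau>) - 2 *\<^sub>R D)) (at \<tau> within S)"
proof -
  have e: "2 *\<^sub>R (K0 D t \<tau> ** K0 D t \<tau>) - 2 *\<^sub>R D
     = dg (\<lambda>i. - (wf D i / 2) * wf D i * (1 - tanh (wf D i * (t - \<tau>)) ^ 2))"
  proof -
    have "2 *\<^sub>R (K0 D t \<tau> ** K0 D t \<tau>) - 2 *\<^sub>R D
      = dg (\<lambda>i. 2 * (wf D i / 2 * tanh (wf D i * (t - \<tau>)) * (wf D i / 2 * tanh (wf D i * (t - \<tau>)))) - 2 * D$i$i)"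
      by (subst (3) D_dg[OF assms(1)]) (simp add: K0_def dg_scaleR)
    also have "\<dots> = dg (\<lambda>i. - (wf D i / 2) * wf D i * (1 - tanh (wf D i * (t - \<tau>)) ^ 2))"
      unfolding dg_eq_iff fun_eq_iff
    proof
      fix i
      show "2 * (wf D i / 2 * tanh (wf D i * (t - \<tau>)) * (wf D i / 2 * tanh (wf D i * (t - \<tau>)))) - 2 * D$i$i
         = - (wf D i / 2) * wf D i * (1 - tanh (wf D i * (t - \<tau>)) ^ 2)"
        using wf_sq[OF assms(2), of i] by (simp add: power2_eq_square algebra_simps)
    qed
    finally show ?thesis .
  qed
  show ?thesis
    apply (subst e)
    unfolding K0_def[abs_def]
    by (rule dg_deriv) (rule tanh_deriv_lin)
qed

lemma prod_bound:
  fixes K E R :: "real^'n^'n"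
  assumes "norm K \<le> MK" "norm R \<le> MR"
  shows "norm (2 *\<^sub>R (K ** E + E ** R)) \<le> (2 * real CARD('n) ^ 3 * (MK + MR)) * norm E"
proof -
  have "norm (2 *\<^sub>R (K ** E + E ** R)) \<le> 2 * (norm (K ** E) + norm (E ** R))"
    using norm_triangle_ineq[of "K ** E" "E ** R"] by simp
  also have "\<dots> \<le> 2 * (real CARD('n) ^ 3 * (norm K * norm E) + real CARD('n) ^ 3 * (norm E * norm R))"
    using norm_mult_bound[of K E] norm_mult_bound[of E R] by simp
  also have "\<dots> \<le> 2 * (real CARD('n) ^ 3 * (MK * norm E) + real CARD('n) ^ 3 * (norm E * MR))"
    using assms by (intro mult_left_mono add_mono mult_right_mono) auto
  finally show ?thesis by (simp add: algebra_simps)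
qed

lemma ric_eq:
  fixes D :: "real^'n^'n"
  assumes Ddiag: "\<forall>i j. i \<noteq> j \<longrightarrow> D $ i $ j = 0" and Dpos: "\<forall>i. D $ i $ i > 0" and tt: "t0 \<le> t"
  shows "riccati_sol (\<lambda>\<tau>. 0) (\<lambda>\<tau>. sqrt 2 *\<^sub>R mat 1) (\<lambda>\<tau>. 2 *\<^sub>R D) t0 t 0 = Rs D t0 t"
  unfolding riccati_sol_def
proof (rule the_equality, intro conjI ballI allI impI)
  fix \<tau> assume \<tau>: "\<tau> \<in> {t0..t}"
  show "(Rs D t0 t has_vector_derivative
          - (transpose 0 ** Rs D t0 t \<tau>) - Rs D t0 t \<tau> ** 0 +
          Rs D t0 t \<tau> ** (sqrt 2 *\<^sub>R mat 1) ** transpose (sqrt 2 *\<^sub>R mat 1) ** Rs D t0 t \<tau> -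
          2 *\<^sub>R D) (at \<tau> within {t0..t})"
    unfolding ric_F using \<tau> apply (simp only: Rs_def if_True)
    by (rule has_vector_derivative_transform[OF \<tau> _ K0_deriv[OF Ddiag Dpos]])
       (use \<tau> in \<open>auto simp: Rs_def\<close>)
next
  show "Rs D t0 t t = 0" using tt by (simp add: Rs_def K0_def zero_dg[symmetric])
next
  fix \<tau> assume "\<tau> \<notin> {t0..t}" then show "Rs D t0 t \<tau> = 0" by (auto simp: Rs_def)
next
  fix K assume H: "(\<forall>\<tau>\<in>{t0..t}. (K has_vector_derivative
          - (transpose 0 ** K \<tau>) - K \<tau> ** 0 +
          K \<tau> ** (sqrt 2 *\<^sub>R mat 1) ** transpose (sqrt 2 *\<^sub>R mat 1) ** K \<tau> -
          2 *\<^sub>R D) (at \<tau> within {t0..t})) \<and> K t = 0 \<and> (\<forall>\<tau>. \<tau> \<notin> {t0..t} \<longrightarrow> K \<tau> = 0)"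
  have dK: "(K has_vector_derivative 2 *\<^sub>R (K s ** K s) - 2 *\<^sub>R D) (at s within {t0..t})" if "s \<in> {t0..t}" for s
    using H that unfolding ric_F by blast
  have dR: "(Rs D t0 t has_vector_derivative 2 *\<^sub>R (Rs D t0 t s ** Rs D t0 t s) - 2 *\<^sub>R D) (at s within {t0..t})"
    if s: "s \<in> {t0..t}" for s
    using s apply (simp only: Rs_def if_True)
    by (rule has_vector_derivative_transform[OF s _ K0_deriv[OF Ddiag Dpos]])
       (use s in \<open>auto simp: Rs_def\<close>)
  obtain MK where MK: "\<forall>s\<in>{t0..t}. norm (K s) \<le> MK" using bounded_on_deriv[OF dK] by blast
  obtain MR where MR: "\<forall>s\<in>{t0..t}. norm (Rs D t0 t s) \<le> MR" using bounded_on_deriv[OF dR] by blast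
  show "K = Rs D t0 t"
  proof
    fix \<tau>
    show "K \<tau> = Rs D t0 t \<tau>"
    proof (cases "\<tau> \<in> {t0..t}")
      case False then show ?thesis using H by (auto simp: Rs_def)
    next
      case True
      have "(\<lambda>s. K s - Rs D t0 t s) \<tau> = 0"
      proof (rule ode_zero[where E' = "\<lambda>s. 2 *\<^sub>R (K s ** (K s - Rs D t0 t s) + (K s - Rs D t0 t s) ** Rs D t0 t s)"
              and C = "2 * real CARD('n) ^ 3 * (MK + MR)" and c = t])
        fix s assume s: "s \<in> {t0..t}"
        have "((\<lambda>s. K s - Rs D t0 t s) has_vector_derivative
           (2 *\<^sub>R (K s ** K s) - 2 *\<^sub>R D) - (2 *\<^sub>R (Rs D t0 t s ** Rs D t0 t s) - 2 *\<^sub>R D)) (at s within {t0..t})"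
          by (intro has_vector_derivative_diff dK dR s)
        moreover have "(2 *\<^sub>R (K s ** K s) - 2 *\<^sub>R D) - (2 *\<^sub>R (Rs D t0 t s ** Rs D t0 t s) - 2 *\<^sub>R D)
            = 2 *\<^sub>R (K s ** (K s - Rs D t0 t s) + (K s - Rs D t0 t s) ** Rs D t0 t s)"
          by (simp add: sq_diff[symmetric] scaleR_diff_right)
        ultimately show "((\<lambda>s. K s - Rs D t0 t s) has_vector_derivative
           2 *\<^sub>R (K s ** (K s - Rs D t0 t s) + (K s - Rs D t0 t s) ** Rs D t0 t s)) (at s within {t0..t})"
          by simp
        show "norm (2 *\<^sub>R (K s ** (K s - Rs D t0 t s) + (K s - Rs D t0 t s) ** Rs D t0 t s))
          \<le> 2 * real CARD('n) ^ 3 * (MK + MR) * norm (K s - Rs D t0 t s)"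
          using MK MR s by (intro prod_bound) auto
      next
        show "t \<in> {t0..t}" using tt by simp
        show "K t - Rs D t0 t t = 0" using H tt by (simp add: Rs_def K0_def zero_dg[symmetric])
        show "\<tau> \<in> {t0..t}" by fact
      qed
      then show ?thesis by simp
    qed
  qed
qed

definition Ph :: "real^'n^'n \<Rightarrow> real \<Rightarrow> real \<Rightarrow> real \<Rightarrow> real \<Rightarrow> real^'n^'n" where
  "Ph D t0 t \<sigma> s = (if s \<in> {t0..t} then dg (\<lambda>i. cosh (wf D i * (t - s)) / cosh (wf D i * (t - \<sigma>))) else 0)"

lemma Rs_deriv:
  fixes D :: "real^'n^'n"
  assumes Ddiag: "\<forall>i j. i \<noteq> j \<longrightarrow> D $ i $ j = 0" and Dpos: "\<forall>i. D $ i $ i > 0"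
  and s: "s \<in> {t0..t}"
  shows "(Rs D t0 t has_vector_derivative 2 *\<^sub>R (Rs D t0 t s ** Rs D t0 t s) - 2 *\<^sub>R D) (at s within {t0..t})"
    using s apply (simp only: Rs_def if_True)
    by (rule has_vector_derivative_transform[OF s _ K0_deriv[OF Ddiag Dpos]])
       (use s in \<open>auto simp: Rs_def\<close>)

lemma Ahat_eq:
  fixes D :: "real^'n^'n"
  assumes Ddiag: "\<forall>i j. i \<noteq> j \<longrightarrow> D $ i $ j = 0" and Dpos: "\<forall>i. D $ i $ i > 0" and tt: "t0 \<le> t"
  shows "A_hat (\<lambda>\<tau>. 0) (\<lambda>\<tau>. sqrt 2 *\<^sub>R mat 1) (\<lambda>\<tau>. 2 *\<^sub>R D) t0 t \<tau> = - (2 *\<^sub>R Rs D t0 t \<tau>)"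
  unfolding A_hat_def Pi_ric_def ric_eq[OF Ddiag Dpos tt]
  by (simp add: BBt dg_const_mul)

lemma cosh_pos': "cosh (x::real) \<noteq> 0" by (simp add: cosh_real_pos[THEN less_imp_neq, symmetric])

lemma Ph_deriv:
  fixes D :: "real^'n^'n"
  assumes s: "s \<in> {t0..t}"
  shows "(Ph D t0 t \<sigma> has_vector_derivative (- (2 *\<^sub>R Rs D t0 t s)) ** Ph D t0 t \<sigma> s) (at s within {t0..t})"
proof -
  have e: "(- (2 *\<^sub>R Rs D t0 t s)) ** Ph D t0 t \<sigma> s
      = dg (\<lambda>i. sinh (wf D i * (t - s)) * (wf D i * (0 - 1)) / cosh (wf D i * (t - \<sigma>)))"
    using s unfolding Rs_def Ph_def K0_def
    by (simp add: dg_scaleR dg_eq_iff fun_eq_iff tanh_def cosh_pos')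
  have "((\<lambda>s. dg (\<lambda>i. cosh (wf D i * (t - s)) / cosh (wf D i * (t - \<sigma>)))) has_vector_derivative
     dg (\<lambda>i. sinh (wf D i * (t - s)) * (wf D i * (0 - 1)) / cosh (wf D i * (t - \<sigma>)))) (at s within {t0..t})"
    by (rule dg_deriv) (auto intro!: derivative_eq_intros)
  then show ?thesis unfolding e
    by (rule has_vector_derivative_transform[OF s, rotated]) (simp add: Ph_def)
qed

lemma trans_eq:
  fixes D :: "real^'n^'n"
  assumes Ddiag: "\<forall>i j. i \<noteq> j \<longrightarrow> D $ i $ j = 0" and Dpos: "\<forall>i. D $ i $ i > 0" and tt: "t0 \<le> t"
  and \<sigma>: "\<sigma> \<in> {t0..t}"
  shows "trans_fun (A_hat (\<lambda>\<tau>. 0) (\<lambda>\<tau>. sqrt 2 *\<^sub>R mat 1) (\<lambda>\<tau>. 2 *\<^sub>R D) t0 t) t0 t \<sigma> = Ph D t0 t \<sigma>"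
  unfolding trans_fun_def Ahat_eq[OF Ddiag Dpos tt]
proof (rule the_equality, intro conjI ballI allI impI)
  fix s assume "s \<in> {t0..t}" then show "(Ph D t0 t \<sigma> has_vector_derivative (- (2 *\<^sub>R Rs D t0 t s)) ** Ph D t0 t \<sigma> s) (at s within {t0..t})"
    by (rule Ph_deriv)
next
  show "Ph D t0 t \<sigma> \<sigma> = mat 1" using \<sigma> by (simp add: Ph_def mat1_dg cosh_pos')
next
  fix s assume "s \<notin> {t0..t}" then show "Ph D t0 t \<sigma> s = 0" by (auto simp: Ph_def)
next
  fix P assume H: "(\<forall>s\<in>{t0..t}. (P has_vector_derivative - (2 *\<^sub>R Rs D t0 t s) ** P s) (at s within {t0..t})) \<and>
        P \<sigma> = mat 1 \<and> (\<forall>s. s \<notin> {t0..t} \<longrightarrow> P s = 0)"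
  obtain MR where MR: "\<forall>s\<in>{t0..t}. norm (Rs D t0 t s) \<le> MR"
    using bounded_on_deriv[OF Rs_deriv[OF Ddiag Dpos]] by blast
  show "P = Ph D t0 t \<sigma>"
  proof
    fix \<tau>
    show "P \<tau> = Ph D t0 t \<sigma> \<tau>"
    proof (cases "\<tau> \<in> {t0..t}")
      case False then show ?thesis using H by (auto simp: Ph_def)
    next
      case True
      have "(\<lambda>s. P s - Ph D t0 t \<sigma> s) \<tau> = 0"
      proof (rule ode_zero[where E' = "\<lambda>s. (- (2 *\<^sub>R Rs D t0 t s)) ** (P s - Ph D t0 t \<sigma> s)"
              and C = "real CARD('n) ^ 3 * (2 * MR)" and c = \<sigma>])
        fix s assume s: "s \<in> {t0..t}"
        have "((\<lambda>s. P s - Ph D t0 t \<sigma> s) has_vector_derivative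
           (- (2 *\<^sub>R Rs D t0 t s)) ** P s - (- (2 *\<^sub>R Rs D t0 t s)) ** Ph D t0 t \<sigma> s) (at s within {t0..t})"
          using H s by (intro has_vector_derivative_diff Ph_deriv) auto
        moreover have "(- (2 *\<^sub>R Rs D t0 t s)) ** P s - (- (2 *\<^sub>R Rs D t0 t s)) ** Ph D t0 t \<sigma> s
            = (- (2 *\<^sub>R Rs D t0 t s)) ** (P s - Ph D t0 t \<sigma> s)"
          by (simp add: vec_eq_iff matrix_matrix_mult_def sum_subtractf[symmetric] algebra_simps)
        ultimately show "((\<lambda>s. P s - Ph D t0 t \<sigma> s) has_vector_derivative
           (- (2 *\<^sub>R Rs D t0 t s)) ** (P s - Ph D t0 t \<sigma> s)) (at s within {t0..t})"
          by simp
        have "norm ((- (2 *\<^sub>R Rs D t0 t s)) ** (P s - Ph D t0 t \<sigma> s))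
           \<le> real CARD('n) ^ 3 * (norm (- (2 *\<^sub>R Rs D t0 t s)) * norm (P s - Ph D t0 t \<sigma> s))"
          by (rule norm_mult_bound)
        also have "\<dots> \<le> real CARD('n) ^ 3 * ((2 * MR) * norm (P s - Ph D t0 t \<sigma> s))"
          using MR s by (intro mult_left_mono mult_right_mono) auto
        finally show "norm ((- (2 *\<^sub>R Rs D t0 t s)) ** (P s - Ph D t0 t \<sigma> s))
          \<le> real CARD('n) ^ 3 * (2 * MR) * norm (P s - Ph D t0 t \<sigma> s)" by (simp add: algebra_simps)
      next
        show "\<sigma> \<in> {t0..t}" by fact
        show "P \<sigma> - Ph D t0 t \<sigma> \<sigma> = 0" using H \<sigma> by (simp add: Ph_def mat1_dg cosh_pos')
        show "\<tau> \<in> {t0..t}" by fact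
      qed
      then show ?thesis by simp
    qed
  qed
qed

lemma wf_pos: assumes "\<forall>i. D $ i $ i > 0" shows "wf D i > 0"
  using assms by (simp add: wf_def)

lemma Phi_hat_eq:
  fixes D :: "real^'n^'n"
  assumes Ddiag: "\<forall>i j. i \<noteq> j \<longrightarrow> D $ i $ j = 0" and Dpos: "\<forall>i. D $ i $ i > 0" and tt: "t0 \<le> t"
  and \<sigma>: "\<sigma> \<in> {t0..t}"
  shows "Phi_hat (\<lambda>\<tau>. 0) (\<lambda>\<tau>. sqrt 2 *\<^sub>R mat 1) (\<lambda>\<tau>. 2 *\<^sub>R D) t0 t \<sigma> = dg (\<lambda>i. 1 / cosh (wf D i * (t - \<sigma>)))"
  unfolding Phi_hat_def trans_eq[OF Ddiag Dpos tt \<sigma>] using tt by (simp add: Ph_def)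

lemma one_minus_tanh_sq: "1 - tanh (x::real) ^ 2 = 1 / cosh x ^ 2"
proof -
  have c: "cosh x \<noteq> 0" by (rule cosh_pos')
  have "cosh x ^ 2 = sinh x ^ 2 + 1" by (rule cosh_square_eq)
  moreover have "1 + sinh x ^ 2 \<noteq> 0" by (smt (verit) zero_le_power2)
  ultimately show ?thesis using c by (simp add: tanh_def field_simps)
qed

lemma Gamma_eq:
  fixes D :: "real^'n^'n"
  assumes Ddiag: "\<forall>i j. i \<noteq> j \<longrightarrow> D $ i $ j = 0" and Dpos: "\<forall>i. D $ i $ i > 0" and tt: "t0 \<le> t"
  shows "Gamma_hat (\<lambda>\<tau>. 0) (\<lambda>\<tau>. sqrt 2 *\<^sub>R mat 1) (\<lambda>\<tau>. 2 *\<^sub>R D) t0 t = dg (\<lambda>i. 2 / wf D i * tanh (wf D i * (t - t0)))"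
proof -
  define F where "F \<sigma> = dg (\<lambda>i. - (2 / wf D i) * tanh (wf D i * (t - \<sigma>)))" for \<sigma>
  define G where "G \<sigma> = dg (\<lambda>i. - (- (2 / wf D i)) * wf D i * (1 - tanh (wf D i * (t - \<sigma>)) ^ 2))" for \<sigma>
  have FG: "(F has_vector_derivative G \<sigma>) (at \<sigma> within {t0..t})" for \<sigma>
    unfolding F_def[abs_def] G_def by (rule dg_deriv) (rule tanh_deriv_lin)
  have "(G has_integral (F t - F t0)) {t0..t}"
    by (rule fundamental_theorem_of_calculus[OF tt FG])
  moreover have "F t - F t0 = dg (\<lambda>i. 2 / wf D i * tanh (wf D i * (t - t0)))"
    by (simp add: F_def)
  moreover have "Phi_hat (\<lambda>\<tau>. 0) (\<lambda>\<tau>. sqrt 2 *\<^sub>R mat 1) (\<lambda>\<tau>. 2 *\<^sub>R D) t0 t \<sigma> ** (sqrt 2 *\<^sub>R mat 1) **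
        transpose (sqrt 2 *\<^sub>R mat 1) ** transpose (Phi_hat (\<lambda>\<tau>. 0) (\<lambda>\<tau>. sqrt 2 *\<^sub>R mat 1) (\<lambda>\<tau>. 2 *\<^sub>R D) t0 t \<sigma>)
      = G \<sigma>" if \<sigma>: "\<sigma> \<in> {t0..t}" for \<sigma>
  proof -
    have "Phi_hat (\<lambda>\<tau>. 0) (\<lambda>\<tau>. sqrt 2 *\<^sub>R mat 1) (\<lambda>\<tau>. 2 *\<^sub>R D) t0 t \<sigma> ** (sqrt 2 *\<^sub>R mat 1) **
        transpose (sqrt 2 *\<^sub>R mat 1) ** transpose (Phi_hat (\<lambda>\<tau>. 0) (\<lambda>\<tau>. sqrt 2 *\<^sub>R mat 1) (\<lambda>\<tau>. 2 *\<^sub>R D) t0 t \<sigma>)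
      = dg (\<lambda>i. 1 / cosh (wf D i * (t - \<sigma>)) * sqrt 2 * sqrt 2 * (1 / cosh (wf D i * (t - \<sigma>))))"
      unfolding Phi_hat_eq[OF Ddiag Dpos tt \<sigma>] by (simp add: mat1_dg dg_scaleR)
    also have "\<dots> = G \<sigma>" unfolding G_def dg_eq_iff fun_eq_iff
    proof
      fix i
      have "wf D i \<noteq> 0" using wf_pos[OF Dpos, of i] by simp
      then show "1 / cosh (wf D i * (t - \<sigma>)) * sqrt 2 * sqrt 2 * (1 / cosh (wf D i * (t - \<sigma>)))
          = - (- (2 / wf D i)) * wf D i * (1 - tanh (wf D i * (t - \<sigma>)) ^ 2)"
        unfolding one_minus_tanh_sq by (simp add: power2_eq_square)
    qed
    finally show ?thesis .
  qed
  ultimately show ?thesis unfolding Gamma_hat_def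
    by (metis (no_types, lifting) integral_cong integral_unique)
qed

lemma matrix_inv_dg:
  assumes "\<forall>i. f i \<noteq> (0::real)"
  shows "matrix_inv (dg f) = dg (\<lambda>i. 1 / f i)"
  unfolding matrix_inv_def
proof (rule some_equality)
  show "dg f ** dg (\<lambda>i. 1 / f i) = mat 1 \<and> dg (\<lambda>i. 1 / f i) ** dg f = mat 1"
    using assms by (simp add: mat1_dg)
next
  fix A' assume H: "dg f ** A' = mat 1 \<and> A' ** dg f = mat 1"
  have e: "dg f ** dg (\<lambda>i. 1 / f i) = mat 1" using assms by (simp add: mat1_dg)
  have "A' = A' ** mat 1" by simp
  also have "\<dots> = A' ** (dg f ** dg (\<lambda>i. 1 / f i))" by (simp only: e)
  also have "\<dots> = (A' ** dg f) ** dg (\<lambda>i. 1 / f i)" by (rule matrix_mul_assoc)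
  also have "\<dots> = dg (\<lambda>i. 1 / f i)" using H by simp
  finally show "A' = dg (\<lambda>i. 1 / f i)" .
qed

lemma sum_delta_mult:
  fixes z :: "'a::finite \<Rightarrow> real"
  shows "(\<Sum>b\<in>UNIV. z b * (if a = b then m else 0)) = m * z a"
proof -
  have "(\<Sum>b\<in>UNIV. z b * (if a = b then m else 0)) = (\<Sum>b\<in>UNIV. if b = a then m * z a else 0)"
    by (rule sum.cong) auto
  then show ?thesis by simp
qed

lemma sum_delta_mult':
  fixes z :: "'a::finite \<Rightarrow> real"
  shows "(\<Sum>b\<in>UNIV. (if a = b then m else 0) * z b) = m * z a"
  using sum_delta_mult[of z a m] by (simp add: mult.commute)

lemma sum_Plus_UNIV: "(\<Sum>i\<in>(UNIV::('a::finite + 'b::finite) set). g i) = (\<Sum>a\<in>UNIV. g (Inl a)) + (\<Sum>b\<in>UNIV. g (Inr b))"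
  by (subst UNIV_Plus_UNIV[symmetric], subst sum.Plus) auto

lemma quad:
  fixes x y :: "real^'n"
  shows "stack x y \<bullet> ((\<chi> i j. case i of
          Inl a \<Rightarrow> (case j of Inl b \<Rightarrow> dg m11 $ a $ b | Inr b \<Rightarrow> dg m12 $ a $ b)
        | Inr a \<Rightarrow> (case j of Inl b \<Rightarrow> dg m21 $ a $ b | Inr b \<Rightarrow> dg m22 $ a $ b)) *v stack x y)
    = (\<Sum>i\<in>UNIV. m11 i * x$i * x$i + m12 i * x$i * y$i + m21 i * y$i * x$i + m22 i * y$i * y$i)"
  by (simp add: inner_vec_def matrix_vector_mult_def stack_def sum_Plus_UNIV sum.distrib sum_delta_mult' sum_delta_mult
     distrib_left algebra_simps)

lemma scalar_id:
  fixes w T x y :: real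
  assumes w: "w > 0" and T: "T > 0"
  shows "(1 / cosh (w * T) * (1 / (2 / w * tanh (w * T))) * (1 / cosh (w * T)) + w / 2 * tanh (w * T)) * x * x
       + (- (1 / cosh (w * T) * (1 / (2 / w * tanh (w * T))))) * x * y
       + (- (1 / (2 / w * tanh (w * T)) * (1 / cosh (w * T)))) * y * x
       + (1 / (2 / w * tanh (w * T))) * y * y
     = (w * (x\<^sup>2 + y\<^sup>2) * cosh (w * T) - 2 * w * x * y) / (2 * sinh (w * T))"
proof -
  define c where "c = cosh (w * T)"
  define s where "s = sinh (w * T)"
  have c: "c > 0" unfolding c_def by simp
  have s: "s > 0" unfolding s_def using w T by simp
  have cs: "c ^ 2 = s ^ 2 + 1" unfolding c_def s_def by (rule cosh_square_eq)
  have th: "tanh (w * T) = s / c" unfolding s_def c_def by (simp add: tanh_def)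
  show ?thesis unfolding th c_def[symmetric] s_def[symmetric]
    using c s w cs
    apply (simp add: field_simps power2_eq_square)
    by algebra
qed

theorem proposition3:
  fixes D :: "real^'n^'n" and t0 t :: real and x y :: "real^'n"
  assumes "0 \<le> t0" and "t0 < t"
    and "\<forall>i j. i \<noteq> j \<longrightarrow> D $ i $ j = 0"
    and "\<forall>i. D $ i $ i > 0"
  shows "(1/2) * (stack x y \<bullet> (M_mat (\<lambda>\<tau>. 0) (\<lambda>\<tau>. sqrt 2 *\<^sub>R mat 1) (\<lambda>\<tau>. 2 *\<^sub>R D) t0 t
                     *v stack x y))
       = (1/2) * (\<Sum>i\<in>UNIV.
           (let \<omega> = 2 * sqrt (D $ i $ i) in
             (\<omega> * ((x $ i)\<^sup>2 + (y $ i)\<^sup>2) * cosh (\<omega> * (t - t0)) - 2 * \<omega> * x $ i * y $ i)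
             / (2 * sinh (\<omega> * (t - t0)))))"
proof -
  have tt: "t0 \<le> t" using assms(2) by simp
  have t0in: "t0 \<in> {t0..t}" using tt by simp
  define T where "T = t - t0"
  have T: "T > 0" using assms(2) by (simp add: T_def)
  have wpos: "wf D i > 0" for i using wf_pos[OF assms(4)] .
  have P: "Phi_hat (\<lambda>\<tau>. 0) (\<lambda>\<tau>. sqrt 2 *\<^sub>R mat 1) (\<lambda>\<tau>. 2 *\<^sub>R D) t0 t t0 = dg (\<lambda>i. 1 / cosh (wf D i * T))"
    using Phi_hat_eq[OF assms(3) assms(4) tt t0in] by (simp add: T_def)
  have G: "matrix_inv (Gamma_hat (\<lambda>\<tau>. 0) (\<lambda>\<tau>. sqrt 2 *\<^sub>R mat 1) (\<lambda>\<tau>. 2 *\<^sub>R D) t0 t)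
      = dg (\<lambda>i. 1 / (2 / wf D i * tanh (wf D i * T)))"
    unfolding Gamma_eq[OF assms(3) assms(4) tt] T_def[symmetric]
  proof (rule matrix_inv_dg, intro allI)
    fix i
    have "tanh (wf D i * T) > 0" using wpos[of i] T by simp
    then show "2 / wf D i * tanh (wf D i * T) \<noteq> 0" using wpos[of i] T by simp
  qed
  have Pi: "Pi_ric (\<lambda>\<tau>. 0) (\<lambda>\<tau>. sqrt 2 *\<^sub>R mat 1) (\<lambda>\<tau>. 2 *\<^sub>R D) t0 t0 0 t = dg (\<lambda>i. wf D i / 2 * tanh (wf D i * T))"
    unfolding Pi_ric_def ric_eq[OF assms(3) assms(4) tt] using tt by (simp add: Rs_def K0_def T_def)
  have M: "M_mat (\<lambda>\<tau>. 0) (\<lambda>\<tau>. sqrt 2 *\<^sub>R mat 1) (\<lambda>\<tau>. 2 *\<^sub>R D) t0 t =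
     (\<chi> i j. case i of
          Inl a \<Rightarrow> (case j of
             Inl b \<Rightarrow> dg (\<lambda>i. 1 / cosh (wf D i * T) * (1 / (2 / wf D i * tanh (wf D i * T))) * (1 / cosh (wf D i * T))
                          + wf D i / 2 * tanh (wf D i * T)) $ a $ b
           | Inr b \<Rightarrow> dg (\<lambda>i. - (1 / cosh (wf D i * T) * (1 / (2 / wf D i * tanh (wf D i * T))))) $ a $ b)
        | Inr a \<Rightarrow> (case j of
             Inl b \<Rightarrow> dg (\<lambda>i. - (1 / (2 / wf D i * tanh (wf D i * T)) * (1 / cosh (wf D i * T)))) $ a $ b
           | Inr b \<Rightarrow> dg (\<lambda>i. 1 / (2 / wf D i * tanh (wf D i * T))) $ a $ b))"
    unfolding M_mat_def Let_def P G Pi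
    by (simp only: dg_transpose dg_mult dg_add dg_uminus)
  show ?thesis
    unfolding M quad
  proof (rule arg_cong[where f = "\<lambda>z. 1/2 * z"], rule sum.cong[OF refl])
    fix i
    show "(1 / cosh (wf D i * T) * (1 / (2 / wf D i * tanh (wf D i * T))) * (1 / cosh (wf D i * T))
                          + wf D i / 2 * tanh (wf D i * T)) * x $ i * x $ i
       + (- (1 / cosh (wf D i * T) * (1 / (2 / wf D i * tanh (wf D i * T))))) * x $ i * y $ i
       + (- (1 / (2 / wf D i * tanh (wf D i * T)) * (1 / cosh (wf D i * T)))) * y $ i * x $ i
       + (1 / (2 / wf D i * tanh (wf D i * T))) * y $ i * y $ i
      = (let \<omega> = 2 * sqrt (D $ i $ i) in
             (\<omega> * ((x $ i)\<^sup>2 + (y $ i)\<^sup>2) * cosh (\<omega> * (t - t0)) - 2 * \<omega> * x $ i * y $ i)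
             / (2 * sinh (\<omega> * (t - t0))))"
      by (simp only: scalar_id[OF wpos T] Let_def) (simp only: T_def wf_def)
  qed
qed

end
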